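(* Let $\{(y_t,x_t,f_t)\}_{t=1}^T$ be data with $y_t\in\mathbb R$, $x_t=(x_{1,t},\dots,x_{d_x,t})'\in\mathbb R^{d_x}$, $f_t\in\mathbb R^{d_f}$. Let $\mathcal A\subset\mathbb R^{2d_x}$ be compact and let $\Gamma\subset\mathbb R^{d_f}$ be compact. Let $L_j\le U_j$, $j=1,\dots,d_x$, be constants such that every $(\beta',\delta')'\in\mathcal A$ satisfies $L_j\le\delta_j\le U_j$ for all $j$. Let $M_t=\max_{\gamma\in\Gamma}|f_t'\gamma|$, fix $\epsilon>0$ and $0<\tau_1<\tau_2<1$. Original problem: minimize $$\mathbb S_T(\alpha,\gamma)=\frac1T\sum_{t=1}^T\big(y_t-x_t'\beta-x_t'\delta\,1\{f_t'\gamma>0\}\big)^2,\qquad \alpha=(\beta',\delta')',$$ over $(\alpha,\gamma)\in\mathcal A\times\Gamma$ subject to $\tau_1\le T^{-1}\sum_{t=1}^T1\{f_t'\gamma>0\}\le\tau_2$; let $(\hat\alpha,\hat\gamma)$ be a minimizer. MIQP problem: with decision variables $\beta,\delta\in\mathbb R^{d_x}$, $\gamma\in\mathbb R^{d_f}$, $d=(d_1,\dots,d_T)$ and real $\ell_{j,t}$ ($j\le d_x$, $t\le T$), minimize $$\mathbb Q_T(\beta,\ell)=\frac1T\sum_{t=1}^T\Big(y_t-x_t'\beta-\sum_{j=1}^{d_x}x_{j,t}\ell_{j,t}\Big)^2$$ subject to, for all $t$ and $j$: $(\beta,\delta)\in\mathcal A$, $\gamma\in\Gamma$, $d_t\in\{0,1\}$,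 $L_j\le\delta_j\le U_j$, $(d_t-1)(M_t+\epsilon)<f_t'\gamma\le d_tM_t$, $d_tL_j\le\ell_{j,t}\le d_tU_j$, $L_j(1-d_t)\le\delta_j-\ell_{j,t}\le U_j(1-d_t)$, and $\tau_1\le T^{-1}\sum_t d_t\le\tau_2$. Let $(\bar\beta,\bar\delta,\bar\gamma,\bar d,\bar\ell)$ be a minimizer and $\bar\alpha=(\bar\beta',\bar\delta')'$. Then $\mathbb S_T(\hat\alpha,\hat\gamma)=\mathbb S_T(\bar\alpha,\bar\gamma)$ (and this common value equals $\mathbb Q_T(\bar\beta,\bar\ell)$).
   Context: This is the mixed integer quadratic programming (MIQP) reformulation of the least-squares estimator of the two-regime regression $y_t=x_t'\beta_0+x_t'\delta_0 1\{f_t'\gamma_0>0\}+\varepsilon_t$. Both minimizers are assumed to exist. *)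

theory Defs
  imports "HOL-Analysis.Analysis"
begin

text \<open>The parameter alpha = (beta, delta) is a pair of vectors,
  so the set A is a subset of R^{d_x} x R^{d_x} (identified with R^{2 d_x}).\<close>

definition ind :: "bool \<Rightarrow> real" where
  "ind P = (if P then 1 else 0)"

definition S_T :: "nat \<Rightarrow> (nat \<Rightarrow> real) \<Rightarrow> (nat \<Rightarrow> real^'x) \<Rightarrow> (nat \<Rightarrow> real^'f)
    \<Rightarrow> real^'x \<Rightarrow> real^'x \<Rightarrow> real^'f \<Rightarrow> real" where
  "S_T T y x f b dl g =
     (\<Sum>t\<in>{1..T}. (y t - x t \<bullet> b - (x t \<bullet> dl) * ind (f t \<bullet> g > 0))\<^sup>2) / real T"

definition orig_feasible :: "nat \<Rightarrow> (nat \<Rightarrow> real^'f) \<Rightarrow> ((real^'x) \<times> (real^'x)) set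
    \<Rightarrow> (real^'f) set \<Rightarrow> real \<Rightarrow> real \<Rightarrow> real^'x \<Rightarrow> real^'x \<Rightarrow> real^'f \<Rightarrow> bool" where
  "orig_feasible T f A \<Gamma> \<tau>1 \<tau>2 b dl g \<longleftrightarrow>
     (b, dl) \<in> A \<and> g \<in> \<Gamma> \<and>
     \<tau>1 \<le> (\<Sum>t\<in>{1..T}. ind (f t \<bullet> g > 0)) / real T \<and>
     (\<Sum>t\<in>{1..T}. ind (f t \<bullet> g > 0)) / real T \<le> \<tau>2"

text \<open>M_t = max over Gamma of |f_t' gamma| (a maximum since Gamma is compact).\<close>
definition M_t :: "(nat \<Rightarrow> real^'f) \<Rightarrow> (real^'f) set \<Rightarrow> nat \<Rightarrow> real" where
  "M_t f \<Gamma> t = Sup ((\<lambda>g. \<bar>f t \<bullet> g\<bar>) ` \<Gamma>)"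

definition Q_T :: "nat \<Rightarrow> (nat \<Rightarrow> real) \<Rightarrow> (nat \<Rightarrow> real^'x)
    \<Rightarrow> real^'x \<Rightarrow> (nat \<Rightarrow> real^'x) \<Rightarrow> real" where
  "Q_T T y x b l =
     (\<Sum>t\<in>{1..T}. (y t - x t \<bullet> b - (\<Sum>j\<in>UNIV. (x t $ j) * (l t $ j)))\<^sup>2) / real T"

text \<open>Decision variables of the MIQP: b, dl, g, d (d t for t = 1..T), l (l t $ j = ell_{j,t}).\<close>
definition miqp_feasible :: "nat \<Rightarrow> (nat \<Rightarrow> real^'f) \<Rightarrow> ((real^'x) \<times> (real^'x)) set
    \<Rightarrow> (real^'f) set \<Rightarrow> real^'x \<Rightarrow> real^'x \<Rightarrow> real \<Rightarrow> real \<Rightarrow> real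
    \<Rightarrow> real^'x \<Rightarrow> real^'x \<Rightarrow> real^'f \<Rightarrow> (nat \<Rightarrow> real) \<Rightarrow> (nat \<Rightarrow> real^'x) \<Rightarrow> bool" where
  "miqp_feasible T f A \<Gamma> L U \<epsilon> \<tau>1 \<tau>2 b dl g d l \<longleftrightarrow>
     (b, dl) \<in> A \<and> g \<in> \<Gamma> \<and>
     (\<forall>j. L $ j \<le> dl $ j \<and> dl $ j \<le> U $ j) \<and>
     (\<forall>t\<in>{1..T}. d t \<in> {0, 1} \<and>
        (d t - 1) * (M_t f \<Gamma> t + \<epsilon>) < f t \<bullet> g \<and> f t \<bullet> g \<le> d t * M_t f \<Gamma> t \<and>
        (\<forall>j. d t * L $ j \<le> l t $ j \<and> l t $ j \<le> d t * U $ j \<and>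
             L $ j * (1 - d t) \<le> dl $ j - l t $ j \<and> dl $ j - l t $ j \<le> U $ j * (1 - d t))) \<and>
     \<tau>1 \<le> (\<Sum>t\<in>{1..T}. d t) / real T \<and> (\<Sum>t\<in>{1..T}. d t) / real T \<le> \<tau>2"

end

theory Submission
  imports Defs
begin

lemma miqp_pointwise:
  assumes "miqp_feasible T f A \<Gamma> L U \<epsilon> \<tau>1 \<tau>2 b dl g d l" and "t \<in> {1..T}"
  shows "d t = ind (f t \<bullet> g > 0) \<and> l t = d t *\<^sub>R dl"
proof -
  from assms have d01: "d t \<in> {0,1}"
    and c1: "(d t - 1) * (M_t f \<Gamma> t + \<epsilon>) < f t \<bullet> g" and c2: "f t \<bullet> g \<le> d t * M_t f \<Gamma> t"
    and cl: "\<forall>j. d t * L $ j \<le> l t $ j \<and> l t $ j \<le> d t * U $ j \<and>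
             L $ j * (1 - d t) \<le> dl $ j - l t $ j \<and> dl $ j - l t $ j \<le> U $ j * (1 - d t)"
    unfolding miqp_feasible_def by auto
  show ?thesis
  proof (cases "d t = 0")
    case True
    then have "f t \<bullet> g \<le> 0" using c2 by simp
    moreover have "l t = 0" using cl True by (simp add: vec_eq_iff) (meson order_antisym)
    ultimately show ?thesis using True by (simp add: ind_def)
  next
    case False
    then have d1: "d t = 1" using d01 by auto
    then have "f t \<bullet> g > 0" using c1 by simp
    moreover have "l t = dl" using cl d1 by (simp add: vec_eq_iff) (meson order_antisym)
    ultimately show ?thesis using d1 by (simp add: ind_def)
  qed
qed

lemma miqp_Q_eq_S:
  assumes "miqp_feasible T f A \<Gamma> L U \<epsilon> \<tau>1 \<tau>2 b dl g d l"
  shows "Q_T T y x b l = S_T T y x f b dl g"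
    and "(\<Sum>t\<in>{1..T}. d t) = (\<Sum>t\<in>{1..T}. ind (f t \<bullet> g > 0))"
proof -
  have "\<And>t. t \<in> {1..T} \<Longrightarrow> (\<Sum>j\<in>UNIV. (x t $ j) * (l t $ j)) = (x t \<bullet> dl) * ind (f t \<bullet> g > 0)"
  proof -
    fix t assume t: "t \<in> {1..T}"
    from miqp_pointwise[OF assms t] have "d t = ind (f t \<bullet> g > 0)" "l t = d t *\<^sub>R dl" by auto
    then show "(\<Sum>j\<in>UNIV. (x t $ j) * (l t $ j)) = (x t \<bullet> dl) * ind (f t \<bullet> g > 0)"
      by (simp add: inner_vec_def sum_distrib_right mult_ac)
  qed
  then show "Q_T T y x b l = S_T T y x f b dl g"
    unfolding Q_T_def S_T_def by (intro arg_cong[where f="\<lambda>s. s / real T"] sum.cong) auto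
  show "(\<Sum>t\<in>{1..T}. d t) = (\<Sum>t\<in>{1..T}. ind (f t \<bullet> g > 0))"
    using miqp_pointwise[OF assms] by (intro sum.cong) auto
qed

lemma M_t_bound:
  assumes "compact \<Gamma>" "g \<in> \<Gamma>"
  shows "\<bar>f t \<bullet> g\<bar> \<le> M_t f \<Gamma> t"
proof -
  have "continuous_on \<Gamma> (\<lambda>g. \<bar>f t \<bullet> g\<bar>)" by (intro continuous_intros)
  then have "compact ((\<lambda>g. \<bar>f t \<bullet> g\<bar>) ` \<Gamma>)" using assms(1) compact_continuous_image by blast
  then have "bdd_above ((\<lambda>g. \<bar>f t \<bullet> g\<bar>) ` \<Gamma>)" by (meson bounded_imp_bdd_above compact_imp_bounded)
  then show ?thesis unfolding M_t_def using assms(2) by (intro cSUP_upper)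
qed

lemma orig_to_miqp:
  assumes "compact \<Gamma>" "\<epsilon> > 0"
    and "\<forall>b dl j. (b, dl) \<in> A \<longrightarrow> L $ j \<le> dl $ j \<and> dl $ j \<le> U $ j"
    and "orig_feasible T f A \<Gamma> \<tau>1 \<tau>2 b dl g"
  shows "miqp_feasible T f A \<Gamma> L U \<epsilon> \<tau>1 \<tau>2 b dl g (\<lambda>t. ind (f t \<bullet> g > 0))
           (\<lambda>t. ind (f t \<bullet> g > 0) *\<^sub>R dl)"
proof -
  from assms(4) have A: "(b, dl) \<in> A" and G: "g \<in> \<Gamma>" unfolding orig_feasible_def by auto
  have bnd: "\<forall>j. L $ j \<le> dl $ j \<and> dl $ j \<le> U $ j" using assms(3) A by blast
  have Mb: "\<And>t. \<bar>f t \<bullet> g\<bar> \<le> M_t f \<Gamma> t" using M_t_bound[OF assms(1) G] .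
  have "\<forall>t\<in>{1..T}. ind (f t \<bullet> g > 0) \<in> {0, 1} \<and>
        (ind (f t \<bullet> g > 0) - 1) * (M_t f \<Gamma> t + \<epsilon>) < f t \<bullet> g \<and> f t \<bullet> g \<le> ind (f t \<bullet> g > 0) * M_t f \<Gamma> t \<and>
        (\<forall>j. ind (f t \<bullet> g > 0) * L $ j \<le> (ind (f t \<bullet> g > 0) *\<^sub>R dl) $ j \<and> (ind (f t \<bullet> g > 0) *\<^sub>R dl) $ j \<le> ind (f t \<bullet> g > 0) * U $ j \<and>
             L $ j * (1 - ind (f t \<bullet> g > 0)) \<le> dl $ j - (ind (f t \<bullet> g > 0) *\<^sub>R dl) $ j \<and> dl $ j - (ind (f t \<bullet> g > 0) *\<^sub>R dl) $ j \<le> U $ j * (1 - ind (f t \<bullet> g > 0)))"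
  proof
    fix t
    have m: "\<bar>f t \<bullet> g\<bar> \<le> M_t f \<Gamma> t" by (rule Mb)
    show "ind (f t \<bullet> g > 0) \<in> {0, 1} \<and>
        (ind (f t \<bullet> g > 0) - 1) * (M_t f \<Gamma> t + \<epsilon>) < f t \<bullet> g \<and> f t \<bullet> g \<le> ind (f t \<bullet> g > 0) * M_t f \<Gamma> t \<and>
        (\<forall>j. ind (f t \<bullet> g > 0) * L $ j \<le> (ind (f t \<bullet> g > 0) *\<^sub>R dl) $ j \<and> (ind (f t \<bullet> g > 0) *\<^sub>R dl) $ j \<le> ind (f t \<bullet> g > 0) * U $ j \<and>
             L $ j * (1 - ind (f t \<bullet> g > 0)) \<le> dl $ j - (ind (f t \<bullet> g > 0) *\<^sub>R dl) $ j \<and> dl $ j - (ind (f t \<bullet> g > 0) *\<^sub>R dl) $ j \<le> U $ j * (1 - ind (f t \<bullet> g > 0)))"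
    proof (cases "f t \<bullet> g > 0")
      case True
      then show ?thesis using m bnd by (simp add: ind_def)
    next
      case False
      then show ?thesis using m bnd assms(2) by (simp add: ind_def)
    qed
  qed
  then show ?thesis using assms(4) A G bnd unfolding miqp_feasible_def orig_feasible_def by auto
qed

theorem theorem1:
  fixes T :: nat and y :: "nat \<Rightarrow> real" and x :: "nat \<Rightarrow> real^'x" and f :: "nat \<Rightarrow> real^'f"
    and A :: "((real^'x) \<times> (real^'x)) set" and \<Gamma> :: "(real^'f) set"
    and L U :: "real^'x" and \<epsilon> \<tau>1 \<tau>2 :: real
    and bh dh :: "real^'x" and gh :: "real^'f"
    and bb db :: "real^'x" and gb :: "real^'f" and dd :: "nat \<Rightarrow> real" and lb :: "nat \<Rightarrow> real^'x"
  assumes "compact A" and "compact \<Gamma>"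
    and "\<forall>j. L $ j \<le> U $ j"
    and "\<forall>b dl j. (b, dl) \<in> A \<longrightarrow> L $ j \<le> dl $ j \<and> dl $ j \<le> U $ j"
    and "\<epsilon> > 0" and "0 < \<tau>1" and "\<tau>1 < \<tau>2" and "\<tau>2 < 1"
    and "orig_feasible T f A \<Gamma> \<tau>1 \<tau>2 bh dh gh"
    and "\<forall>b dl g. orig_feasible T f A \<Gamma> \<tau>1 \<tau>2 b dl g \<longrightarrow>
                 S_T T y x f bh dh gh \<le> S_T T y x f b dl g"
    and "miqp_feasible T f A \<Gamma> L U \<epsilon> \<tau>1 \<tau>2 bb db gb dd lb"
    and "\<forall>b dl g d l. miqp_feasible T f A \<Gamma> L U \<epsilon> \<tau>1 \<tau>2 b dl g d l \<longrightarrow>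
                 Q_T T y x bb lb \<le> Q_T T y x b l"
  shows "S_T T y x f bh dh gh = S_T T y x f bb db gb \<and> S_T T y x f bb db gb = Q_T T y x bb lb"
proof -
  note mq = miqp_Q_eq_S[OF assms(11)]
  note mq1 = mq(1)[of y x]
  have "orig_feasible T f A \<Gamma> \<tau>1 \<tau>2 bb db gb"
    using assms(11) mq(2) unfolding miqp_feasible_def orig_feasible_def by auto
  then have 1: "S_T T y x f bh dh gh \<le> S_T T y x f bb db gb" using assms(10) by blast
  have hm: "miqp_feasible T f A \<Gamma> L U \<epsilon> \<tau>1 \<tau>2 bh dh gh (\<lambda>t. ind (f t \<bullet> gh > 0))
           (\<lambda>t. ind (f t \<bullet> gh > 0) *\<^sub>R dh)"
    using orig_to_miqp[OF assms(2) assms(5) assms(4) assms(9)] .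
  have 2: "Q_T T y x bb lb \<le> S_T T y x f bh dh gh"
    using assms(12) hm miqp_Q_eq_S(1)[OF hm] by (metis (no_types, lifting))
  show ?thesis using 1 2 mq1 by linarith
qed

end
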